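(* Let $\mathfrak{S}=(\mathcal{X},\mathsf{S},\gamma,(\Lambda_{a})_{a\in\mathcal{A}})$ be a spectral decomposition system for the Euclidean space $\mathfrak{H}$ and let $\varphi\colon\mathcal{X}\to\left]-\infty,+\infty\right]$ be $\mathsf{S}$-invariant. Then $(\varphi\circ\gamma)^*=\varphi^*\circ\gamma$.
   Context: A Euclidean space is a finite-dimensional real inner product space; inner products are written $\langle\cdot,\cdot\rangle$ and norms $\|\cdot\|$. Let $\mathfrak{H}$ and $\mathcal{X}$ be Euclidean spaces, let $\mathsf{S}$ be a group acting on $\mathcal{X}$ by linear isometries, let $\gamma\colon\mathfrak{H}\to\mathcal{X}$, and let $(\Lambda_a)_{a\in\mathcal{A}}$ be a family of linear operators from $\mathcal{X}$ to $\mathfrak{H}$. The orbit of $x$ is $\mathsf{S}\cdot x=\{s\cdot x: s\in\mathsf{S}\}$; a map $f$ on $\mathcal{X}$ is $\mathsf{S}$-invariant if $f(s\cdot x)=f(x)$ for all $s,x$. The tuple is a spectral decomposition system for $\mathfrak{H}$ if: [A] every $\Lambda_a$ is an isometry; [B] there exists an $\mathsf{S}$-invariant $\tau\colon\mathcal{X}\to\mathcal{X}$ with $\tau(x)\in\mathsf{S}\cdot x$ for all $x$ and $\gamma\circ\Lambda_a=\tau$ for all $a$; [C] for every $X\in\mathfrak{H}$ there is $a$ with $X=\Lambda_a\gamma(X)$; [D] $\langle X,Y\rangle\leq\langle\gamma(X),\gamma(Y)\rangle$ for all $X,Y\in\mathfrak{H}$. The Fenchel conjugate of $f$ on a Euclidean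 space $\mathcal{H}$ is $f^*(y)=\sup_{x\in\mathcal{H}}(\langle x,y\rangle-f(x))$. *)

theory Defs
  imports "HOL-Analysis.Analysis" "HOL-Library.Extended_Real" "HOL-Algebra.Group_Action"
begin

definition fenchel_conj :: "('a::euclidean_space \<Rightarrow> ereal) \<Rightarrow> 'a \<Rightarrow> ereal" where
  "fenchel_conj f y = (SUP x. ereal (inner x y) - f x)"

definition linear_isometric_action :: "('g, 'b) monoid_scheme \<Rightarrow> ('g \<Rightarrow> 'x::euclidean_space \<Rightarrow> 'x) \<Rightarrow> bool" where
  "linear_isometric_action G act \<longleftrightarrow>
     group_action G UNIV act \<and>
     (\<forall>g\<in>carrier G. linear (act g) \<and> (\<forall>x. norm (act g x) = norm x))"

definition S_invariant :: "('g, 'b) monoid_scheme \<Rightarrow> ('g \<Rightarrow> 'x \<Rightarrow> 'x) \<Rightarrow> ('x \<Rightarrow> 'c) \<Rightarrow> bool" where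
  "S_invariant G act f \<longleftrightarrow> (\<forall>g\<in>carrier G. \<forall>x. f (act g x) = f x)"

definition spectral_decomposition_system ::
  "('g, 'b) monoid_scheme \<Rightarrow> ('g \<Rightarrow> 'x::euclidean_space \<Rightarrow> 'x) \<Rightarrow> ('h::euclidean_space \<Rightarrow> 'x)
     \<Rightarrow> ('i \<Rightarrow> 'x \<Rightarrow> 'h) \<Rightarrow> 'i set \<Rightarrow> bool" where
  "spectral_decomposition_system G act \<gamma> \<Lambda> A \<longleftrightarrow>
     linear_isometric_action G act \<and>
     (\<forall>a\<in>A. linear (\<Lambda> a) \<and> (\<forall>x. norm (\<Lambda> a x) = norm x)) \<and>
     (\<exists>\<tau>. S_invariant G act \<tau> \<and> (\<forall>x. \<tau> x \<in> orbit G act x) \<and> (\<forall>a\<in>A. \<gamma> \<circ> \<Lambda> a = \<tau>)) \<and>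
     (\<forall>X. \<exists>a\<in>A. X = \<Lambda> a (\<gamma> X)) \<and>
     (\<forall>X Y. inner X Y \<le> inner (\<gamma> X) (\<gamma> Y))"

end

theory Submission
  imports Defs
begin

lemma lin_iso_inner:
  fixes f :: "'a::euclidean_space \<Rightarrow> 'b::euclidean_space"
  assumes "linear f" "\<forall>x. norm (f x) = norm x"
  shows "inner (f x) (f y) = inner x y"
proof -
  have "norm (f (x + y))^2 = norm (x+y)^2" using assms by simp
  hence "norm (f x + f y)^2 = norm (x+y)^2" using linear_add[OF assms(1)] by simp
  hence "inner (f x + f y) (f x + f y) = inner (x+y) (x+y)"
    by (simp add: power2_norm_eq_inner)
  moreover have "inner (f x) (f x) = inner x x" "inner (f y) (f y) = inner y y"
    using assms by (simp_all flip: power2_norm_eq_inner)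
  ultimately show ?thesis by (simp add: algebra_simps inner_commute)
qed

theorem corollary5p3:
  fixes G :: "('g, 'b) monoid_scheme"
    and act :: "'g \<Rightarrow> 'x::euclidean_space \<Rightarrow> 'x"
    and \<gamma> :: "'h::euclidean_space \<Rightarrow> 'x"
    and \<Lambda> :: "'i \<Rightarrow> 'x \<Rightarrow> 'h"
    and A :: "'i set"
    and \<phi> :: "'x \<Rightarrow> ereal"
  assumes "spectral_decomposition_system G act \<gamma> \<Lambda> A"
    and "\<forall>x. \<phi> x \<noteq> -\<infinity>"
    and "S_invariant G act \<phi>"
  shows "fenchel_conj (\<phi> \<circ> \<gamma>) = fenchel_conj \<phi> \<circ> \<gamma>"
proof
  fix Y :: 'h
  note sd = assms(1)[unfolded spectral_decomposition_system_def]
  obtain \<tau> where tau: "S_invariant G act \<tau>" "\<forall>x. \<tau> x \<in> orbit G act x" "\<forall>a\<in>A. \<gamma> \<circ> \<Lambda> a = \<tau>"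
    using sd by blast
  obtain a where a: "a \<in> A" "Y = \<Lambda> a (\<gamma> Y)" using sd by blast
  have La: "linear (\<Lambda> a)" "\<forall>x. norm (\<Lambda> a x) = norm x" using sd a by auto
  show "fenchel_conj (\<phi> \<circ> \<gamma>) Y = (fenchel_conj \<phi> \<circ> \<gamma>) Y"
    unfolding fenchel_conj_def o_def
  proof (rule antisym)
    show "(SUP X. ereal (inner X Y) - \<phi> (\<gamma> X)) \<le> (SUP x. ereal (inner x (\<gamma> Y)) - \<phi> x)"
    proof (rule SUP_least)
      fix X
      have "ereal (inner X Y) - \<phi> (\<gamma> X) \<le> ereal (inner (\<gamma> X) (\<gamma> Y)) - \<phi> (\<gamma> X)"
        using sd by (intro ereal_minus_mono) auto
      also have "\<dots> \<le> (SUP x. ereal (inner x (\<gamma> Y)) - \<phi> x)" by (rule SUP_upper) auto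
      finally show "ereal (inner X Y) - \<phi> (\<gamma> X) \<le> (SUP x. ereal (inner x (\<gamma> Y)) - \<phi> x)" .
    qed
  next
    show "(SUP x. ereal (inner x (\<gamma> Y)) - \<phi> x) \<le> (SUP X. ereal (inner X Y) - \<phi> (\<gamma> X))"
    proof (rule SUP_least)
      fix x
      have "\<gamma> (\<Lambda> a x) = \<tau> x" using tau(3) a(1) by (metis comp_apply)
      moreover obtain g where "g \<in> carrier G" "\<tau> x = act g x" using tau(2) unfolding orbit_def by blast
      ultimately have ph: "\<phi> (\<gamma> (\<Lambda> a x)) = \<phi> x" using assms(3) unfolding S_invariant_def by simp
      have "inner (\<Lambda> a x) Y = inner x (\<gamma> Y)"
        using lin_iso_inner[OF La, of x "\<gamma> Y"] a(2) by simp
      hence "ereal (inner x (\<gamma> Y)) - \<phi> x = ereal (inner (\<Lambda> a x) Y) - \<phi> (\<gamma> (\<Lambda> a x))"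
        using ph by simp
      also have "\<dots> \<le> (SUP X. ereal (inner X Y) - \<phi> (\<gamma> X))" by (rule SUP_upper) auto
      finally show "ereal (inner x (\<gamma> Y)) - \<phi> x \<le> (SUP X. ereal (inner X Y) - \<phi> (\<gamma> X))" .
    qed
  qed
qed

end
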